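(* For all real numbers $t,s$, $$\lim_{k\to\infty} C_k\, k^t\, \eta_k^{2k+s} = 0.$$
   Context: For integers $k\ge 2$, $C_k:=\frac{(2k-2)!}{(k-1)!}$. Define the polynomials $p_k(z)=1-2z-(7+8k)z^2$, $h_k(z)=1-z-C_k z^{2k+1}$, and $\Delta_k(z)=p_k(z)+4z^{2k+1}C_k h_k(z)$. $\eta_k$ denotes the unique real root of $\Delta_k$ in the open interval $\left(0,\frac{1}{\sqrt{8+8k}}\right)$. *)

theory Defs
  imports Complex_Main
begin

definition C :: "nat \<Rightarrow> real" where
  "C k = fact (2*k - 2) / fact (k - 1)"

definition p :: "nat \<Rightarrow> real \<Rightarrow> real" where
  "p k z = 1 - 2*z - (7 + 8 * real k) * z^2"

definition h :: "nat \<Rightarrow> real \<Rightarrow> real" where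
  "h k z = 1 - z - C k * z^(2*k+1)"

definition Delta :: "nat \<Rightarrow> real \<Rightarrow> real" where
  "Delta k z = p k z + 4 * z^(2*k+1) * C k * h k z"

definition eta :: "nat \<Rightarrow> real" where
  "eta k = (THE z. 0 < z \<and> z < 1 / sqrt (8 + 8 * real k) \<and> Delta k z = 0)"

end

theory Submission imports Defs "HOL-Real_Asymp.Real_Asymp" begin

lemma C_nonneg: "C k \<ge> 0" unfolding C_def by simp

lemma C_le: assumes "k \<ge> 1" shows "C k \<le> (2 * real k) ^ k"
proof -
  define m where "m = k - 1"
  have n: "2*k - 2 = 2*m" and mm: "2*m - m = m" using assms by (auto simp: m_def)
  have d: "(fact m :: nat) dvd fact (2*m)" by (rule fact_dvd) simp
  have le: "(fact (2*m) :: nat) div fact m \<le> (2*m)^m"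
    using fact_div_fact_le_pow[of m "2*m"] mm by simp
  have "C k = real ((fact (2*m) :: nat) div fact m)"
    unfolding C_def n m_def[symmetric] using d by (simp add: real_of_nat_div of_nat_fact)
  also have "\<dots> \<le> real ((2*m)^m)" using le by linarith
  also have "\<dots> = (2*real m)^m" by simp
  also have "\<dots> \<le> (2*real k)^m" by (rule power_mono) (auto simp: m_def)
  also have "\<dots> \<le> (2*real k)^k" by (rule power_increasing) (use assms in \<open>auto simp: m_def\<close>)
  finally show ?thesis .
qed

lemma Cz_le:
  assumes "k \<ge> 1" "0 \<le> z" "z \<le> 1 / sqrt (8 + 8 * real k)"
  shows "C k * z^(2*k) \<le> (1/4)^k"
proof -
  have "z^(2*k) = (z^2)^k" by (simp add: power_mult)
  also have "\<dots> \<le> (1/(8 + 8 * real k))^k"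
  proof (rule power_mono)
    have "z^2 \<le> (1 / sqrt (8 + 8 * real k))^2" using assms by (intro power_mono) auto
    also have "\<dots> = 1/(8 + 8 * real k)" by (simp add: power_divide)
    finally show "z^2 \<le> 1/(8 + 8 * real k)" .
  qed simp
  finally have zz: "z^(2*k) \<le> (1/(8 + 8 * real k))^k" .
  have "C k * z^(2*k) \<le> (2 * real k) ^ k * (1/(8 + 8 * real k))^k"
    by (intro mult_mono C_le zz assms) (auto simp: C_nonneg)
  also have "\<dots> = (2 * real k / (8 + 8 * real k))^k" by (simp add: power_divide)
  also have "\<dots> \<le> (1/4)^k" by (intro power_mono) (auto simp: field_simps)
  finally show ?thesis .
qed

definition D' :: "nat \<Rightarrow> real \<Rightarrow> real" where
 "D' k z = -2 - 2*(7+8*real k)*z + 4*C k*(2*real k+1)*z^(2*k) - 4*C k*(2*real k+2)*z^(2*k+1)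
    - 4*(C k)^2*(4*real k+2)*z^(4*k+1)"

lemma Delta_alt: "Delta k z = 1 - 2*z - (7+8*real k)*z^2 + 4*C k*z^(2*k+1) - 4*C k*z^(2*k+2)
   - 4*(C k)^2*z^(4*k+2)"
proof -
  have e: "z^(4*k+2) = z^(2*k+1)*z^(2*k+1)" "z^(2*k+2) = z^(2*k+1)*z"
    by (simp_all add: power_add[symmetric])
  show ?thesis unfolding Delta_def p_def h_def e by (simp add: algebra_simps power2_eq_square)
qed

lemma Delta_deriv: "DERIV (Delta k) z :> D' k z"
proof -
  have "DERIV (\<lambda>z. 1 - 2*z - (7+8*real k)*z^2 + 4*C k*z^(2*k+1) - 4*C k*z^(2*k+2)
   - 4*(C k)^2*z^(4*k+2)) z :> D' k z"
    unfolding D'_def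
    by (rule derivative_eq_intros refl | simp)+ (simp add: algebra_simps)
  then show ?thesis unfolding Delta_alt[abs_def] .
qed

lemma pow4_bound: "k \<ge> 3 \<Longrightarrow> 2*(2*real k+1) < 4^k"
proof (induction k rule: nat_induct_at_least)
  case base then show ?case by simp
next
  case (Suc n) then show ?case by simp
qed

lemma D'_neg:
  assumes "k \<ge> 3" "0 \<le> z" "z \<le> 1 / sqrt (8 + 8 * real k)"
  shows "D' k z < 0"
proof -
  have w: "C k * z^(2*k) \<le> (1/4)^k" using Cz_le[of k z] assms by simp
  have "4*C k*(2*real k+1)*z^(2*k) = 4*(2*real k+1)*(C k * z^(2*k))" by simp
  also have "\<dots> \<le> 4*(2*real k+1)*(1/4)^k" by (intro mult_left_mono w) auto
  also have "\<dots> < 2" using pow4_bound[OF assms(1)] by (simp add: field_simps)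
  finally have a: "4*C k*(2*real k+1)*z^(2*k) < 2" .
  have b: "0 \<le> 2*(7+8*real k)*z" "0 \<le> 4*C k*(2*real k+2)*z^(2*k+1)"
     "0 \<le> 4*(C k)^2*(4*real k+2)*z^(4*k+1)" using assms C_nonneg[of k] by auto
  show ?thesis unfolding D'_def using a b by linarith
qed

lemma Delta_decr:
  assumes "k \<ge> 3" "0 \<le> x" "x < y" "y \<le> 1 / sqrt (8 + 8 * real k)"
  shows "Delta k y < Delta k x"
  by (rule DERIV_neg_imp_decreasing[OF assms(3)])
     (use assms Delta_deriv D'_neg in \<open>fastforce\<close>)

lemma Delta_w: "Delta k z = p k z + 4*z*(C k*z^(2*k))*(1 - z - (C k*z^(2*k))*z)"
  unfolding Delta_def h_def by (simp add: algebra_simps)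

lemma Delta_a:
  assumes "k \<ge> 3" defines "a \<equiv> 1 / sqrt (8 + 8 * real k)"
  shows "Delta k a < 0"
proof -
  define w where "w = C k * a^(2*k)"
  have a0: "0 < a" unfolding a_def by simp
  have "sqrt (8 + 8 * real k) \<ge> 1" by simp
  hence a1: "a \<le> 1" unfolding a_def by simp
  have a2: "a^2 = 1/(8 + 8 * real k)" unfolding a_def by (simp add: power_divide)
  have w0: "0 \<le> w" unfolding w_def using C_nonneg a0 by simp
  have w1: "w \<le> (1/4)^k" unfolding w_def using Cz_le[of k a] assms a0 by simp
  also have "\<dots> \<le> (1/4)^3" by (rule power_decreasing) (use assms in auto)
  finally have w2: "w \<le> 1/64" by (simp add: power3_eq_cube)
  have wa: "0 \<le> w*a" using w0 a0 by simp
  have "4*a*w*(1 - a - w*a) \<le> 4*a*w*1" by (rule mult_left_mono) (use wa a0 w0 in \<open>linarith | simp\<close>)+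
  also have "\<dots> \<le> 4*a*(1/64)" using a0 w2 by simp
  finally have t: "4*a*w*(1 - a - w*a) \<le> a/16" by simp
  have pa: "p k a = 1/(8 + 8 * real k) - 2*a"
    unfolding p_def a2 by (simp add: field_simps)
  have "a^2 < 31/16*a" using a0 a1 by (simp add: power2_eq_square)
  then show ?thesis unfolding Delta_w w_def[symmetric] pa using t a2 by linarith
qed

lemma Delta_b:
  assumes "k \<ge> 3" defines "a \<equiv> 1 / sqrt (8 + 8 * real k)"
  shows "Delta k (a/2) > 0"
proof -
  define b where "b = a/2"
  define w where "w = C k * b^(2*k)"
  have a0: "0 < a" unfolding a_def by simp
  have "sqrt (8 + 8 * real k) \<ge> 2" using real_sqrt_le_mono[of 4 "8 + 8 * real k"] by simp
  hence a1: "a \<le> 1/2" unfolding a_def by (simp add: field_simps)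
  have a2: "a^2 = 1/(8 + 8 * real k)" unfolding a_def by (simp add: power_divide)
  have w0: "0 \<le> w" unfolding w_def b_def using C_nonneg a0 by simp
  have w1: "w \<le> (1/4)^k" unfolding w_def b_def
  proof (rule Cz_le)
    have "a/2 \<le> a" using a0 by simp
    then show "a/2 \<le> 1 / sqrt (8 + 8 * real k)" unfolding a_def .
  qed (use assms(1) a0 in auto)
  also have "\<dots> \<le> (1/4)^3" by (rule power_decreasing) (use assms in auto)
  finally have w2: "w \<le> 1/64" by (simp add: power3_eq_cube)
  have b0: "0 < b" "b \<le> 1/4" using a0 a1 by (auto simp: b_def)
  have "1 - b - w*b \<ge> -1" using b0 w0 w2 mult_mono[of w "1/64" b "1/4"] by linarith
  hence "4*b*w*(1 - b - w*b) \<ge> 4*b*w*(-1)" using b0 w0 by (intro mult_left_mono) auto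
  moreover have "4*b*w \<le> 4*(1/4)*(1/64)" using b0 w0 w2 by (intro mult_mono) auto
  ultimately have t: "4*b*w*(1 - b - w*b) \<ge> -1/64" by simp
  have "(7 + 8 * real k) * b^2 \<le> 1/4" unfolding b_def power_divide a2 by (simp add: field_simps)
  hence "p k b \<ge> 1/4" unfolding p_def using b0 by linarith
  then show ?thesis unfolding b_def[symmetric] Delta_w w_def[symmetric] using t by linarith
qed

lemma Delta0: "k \<ge> 1 \<Longrightarrow> Delta k 0 = 1" unfolding Delta_alt by simp

lemma root:
  assumes "k \<ge> 3" defines "a \<equiv> 1 / sqrt (8 + 8 * real k)"
  shows "\<exists>!z. 0 < z \<and> z < a \<and> Delta k z = 0" and "a/2 < eta k"
proof -
  have a0: "0 < a" unfolding a_def by simp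
  have cont: "continuous_on {a/2..a} (Delta k)"
    using Delta_deriv DERIV_isCont continuous_at_imp_continuous_on by blast
  have "\<exists>x\<ge>a/2. x \<le> a \<and> Delta k x = 0"
    by (rule IVT2'[OF _ _ _ cont]) (use Delta_a[OF assms(1)] Delta_b[OF assms(1)] a0 in \<open>auto simp flip: a_def\<close>)
  then obtain z where z: "a/2 \<le> z" "z \<le> a" "Delta k z = 0" by blast
  have za: "z \<noteq> a" "z \<noteq> a/2" using z Delta_a[OF assms(1)] Delta_b[OF assms(1)] unfolding a_def by auto
  have uq: "y = z" if "0 < y" "y < a" "Delta k y = 0" for y
  proof (rule ccontr)
    assume "y \<noteq> z"
    then consider "y < z" | "z < y" by linarith
    then show False
      using Delta_decr[OF assms(1), of y z] Delta_decr[OF assms(1), of z y] that z a0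
      unfolding a_def by (cases; force)
  qed
  show ex: "\<exists>!z. 0 < z \<and> z < a \<and> Delta k z = 0"
    using z za a0 uq by (intro ex1I[of _ z]) auto
  have e: "0 < eta k \<and> eta k < a \<and> Delta k (eta k) = 0"
    unfolding eta_def a_def[symmetric] by (rule theI'[OF ex])
  show "a/2 < eta k"
  proof (rule ccontr)
    assume "\<not> a/2 < eta k"
    hence "eta k < a/2" using e za uq by force
    hence "Delta k (a/2) < Delta k (eta k)" using Delta_decr[OF assms(1), of "eta k" "a/2"] e a0
      unfolding a_def by force
    then show False using e Delta_b[OF assms(1)] unfolding a_def by simp
  qed
qed

lemma bound:
  assumes "k \<ge> 3"
  shows "norm (C k * real k powr t * eta k powr (2 * real k + s))
     \<le> (1/4)^k * real k powr t * (2 * sqrt (8 + 8 * real k)) powr \<bar>s\<bar>"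
proof -
  define a where "a = 1 / sqrt (8 + 8 * real k)"
  define e where "e = eta k"
  have ex: "\<exists>!z. 0 < z \<and> z < a \<and> Delta k z = 0" and ea: "a/2 < e"
    using root[OF assms] unfolding a_def e_def by auto
  have a0: "0 < a" unfolding a_def by simp
  have E: "0 < e \<and> e < a \<and> Delta k e = 0"
    unfolding e_def eta_def a_def[symmetric] by (rule theI'[OF ex])
  have e0: "0 < e" using E by simp
  have w: "C k * e^(2*k) \<le> (1/4)^k" using Cz_le[of k e] E assms unfolding a_def by simp
  have es: "e powr s \<le> (2 * sqrt (8 + 8 * real k)) powr \<bar>s\<bar>"
  proof (cases "s \<ge> 0")
    case True
    have "a \<le> 1" unfolding a_def by simp
    hence "e powr s \<le> 1 powr s" using E True by (intro powr_mono2) auto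
    also have "\<dots> \<le> (2 * sqrt (8 + 8 * real k)) powr \<bar>s\<bar>"
    proof -
      have "1 \<le> sqrt (8 + 8 * real k)" by simp
      hence "1 \<le> (2 * sqrt (8 + 8 * real k)) powr \<bar>s\<bar>" by (intro ge_one_powr_ge_zero) linarith+
      thus ?thesis by simp
    qed
    finally show ?thesis .
  next
    case False
    have "e powr s = (1/e) powr (-s)" using e0 by (simp add: powr_divide powr_minus_divide)
    also have "\<dots> \<le> (2/a) powr (-s)" using False e0 ea a0 by (intro powr_mono2) (auto simp: field_simps)
    also have "2/a = 2 * sqrt (8 + 8 * real k)" unfolding a_def by simp
    finally show ?thesis using False by simp
  qed
  have "e powr (2 * real k + s) = e^(2*k) * e powr s"
    using e0 by (simp add: powr_add powr_realpow[symmetric])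
  hence "norm (C k * real k powr t * eta k powr (2 * real k + s))
      = (C k * e^(2*k)) * real k powr t * e powr s"
    unfolding e_def[symmetric] using C_nonneg[of k] e0 by (simp add: abs_mult)
  also have "\<dots> \<le> (1/4)^k * real k powr t * (2 * sqrt (8 + 8 * real k)) powr \<bar>s\<bar>"
    by (intro mult_mono w es) (auto simp: C_nonneg e0)
  finally show ?thesis .
qed

theorem lemma2:
  fixes t s :: real
  shows "(\<lambda>k. C k * real k powr t * eta k powr (2 * real k + s)) \<longlonglongrightarrow> 0"
proof (rule tendsto_sandwich[of "\<lambda>_. 0"])
  show "\<forall>\<^sub>F k in sequentially. 0 \<le> C k * real k powr t * eta k powr (2 * real k + s)"
    by (simp add: C_nonneg)
  show "\<forall>\<^sub>F k in sequentially. (C k * real k powr t * eta k powr (2 * real k + s))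
     \<le> (1/4)^k * real k powr t * (2 * sqrt (8 + 8 * real k)) powr \<bar>s\<bar>"
    using bound eventually_sequentially C_nonneg by (smt (verit) real_norm_def)
  show "(\<lambda>k. (1/4)^k * real k powr t * (2 * sqrt (8 + 8 * real k)) powr \<bar>s\<bar>) \<longlonglongrightarrow> 0"
    by real_asymp
qed simp

end
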